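(* Let $m$ be an even non-negative integer and let $d_2$ be an $(m+3)\times(m+3)$ alternating matrix over a commutative ring, partitioned as $d_2=\begin{bmatrix}\varphi&\psi^T\\-\psi&\Phi\end{bmatrix}$ with $\varphi$ an $m\times m$ alternating matrix, $\Phi$ a $3\times3$ alternating matrix, and $\psi$ a $3\times m$ matrix. Then for each $\ell\in\{1,2,3\}$, $$\operatorname{Pf}_{m+\ell}(d_2)=\operatorname{Pf}_\ell(\psi\check\varphi\psi^T)+\operatorname{Pf}(\varphi)\operatorname{Pf}_\ell(\Phi).$$
   Context: An $s\times s$ matrix is alternating if it is skew-symmetric with zero diagonal. $\operatorname{Pf}$ is the Pfaffian ($0$ for odd size, $1$ for the empty matrix). For an odd-size alternating $\varphi$, $\operatorname{Pf}_\ell(\varphi)=(-1)^{\ell+1}\operatorname{Pf}(\varphi$ with row and column $\ell$ deleted$)$. For an even-size alternating $\varphi$, $\check\varphi$ is the alternating matrix with $(\check\varphi)_{i,j}=(-1)^{i+j}\operatorname{Pf}(\varphi$ with rows and columns $i,j$ deleted$)$ for $i<j$, zero diagonal, and $(\check\varphi)_{j,i}=-(\check\varphi)_{i,j}$ (when $m=0$, $\check\varphi$ is empty and the first term is $0$). *)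

theory Defs
  imports "HOL-Combinatorics.Permutations"
begin

text \<open>Square matrices of size n are represented as functions nat => nat => 'a,
  with (0-based) indices 0..n-1; entries outside this range are irrelevant.
  Row/column i of the paper (1-based) corresponds to index i-1 here.\<close>

definition alternating :: "nat \<Rightarrow> (nat \<Rightarrow> nat \<Rightarrow> 'a::comm_ring_1) \<Rightarrow> bool" where
  "alternating n A \<longleftrightarrow> (\<forall>i<n. \<forall>j<n. A j i = - A i j) \<and> (\<forall>i<n. A i i = 0)"

text \<open>Pfaffian of an n x n matrix: sum over permutations sigma of {0..<n} with
  sigma(2i) < sigma(2i+1) and sigma(0) < sigma(2) < sigma(4) < ... (i.e. perfect
  matchings), of sign(sigma) times the product of the matched entries.
  It is 0 for odd n and 1 for the empty matrix.\<close>

definition pfaffian :: "nat \<Rightarrow> (nat \<Rightarrow> nat \<Rightarrow> 'a::comm_ring_1) \<Rightarrow> 'a" where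
  "pfaffian n A = (if odd n then 0 else
     (\<Sum>\<sigma> \<in> {\<sigma>. \<sigma> permutes {0..<n} \<and>
                 (\<forall>i < n div 2. \<sigma> (2*i) < \<sigma> (2*i+1)) \<and>
                 (\<forall>i. i + 1 < n div 2 \<longrightarrow> \<sigma> (2*i) < \<sigma> (2*i+2))}.
        of_int (sign \<sigma>) * (\<Prod>i<n div 2. A (\<sigma> (2*i)) (\<sigma> (2*i+1)))))"

definition skip :: "nat \<Rightarrow> nat \<Rightarrow> nat" where
  "skip k i = (if i < k then i else i + 1)"

definition delete_rc :: "nat \<Rightarrow> (nat \<Rightarrow> nat \<Rightarrow> 'a) \<Rightarrow> nat \<Rightarrow> nat \<Rightarrow> 'a" where
  "delete_rc k A = (\<lambda>i j. A (skip k i) (skip k j))"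

text \<open>Pf_l for an n x n matrix (n odd), l 1-based:
  (-1)^(l+1) Pf(A with row and column l deleted).\<close>
definition pf_minor :: "nat \<Rightarrow> nat \<Rightarrow> (nat \<Rightarrow> nat \<Rightarrow> 'a::comm_ring_1) \<Rightarrow> 'a" where
  "pf_minor n l A = (-1) ^ (l + 1) * pfaffian (n - 1) (delete_rc (l - 1) A)"

text \<open>The adjoint-like matrix check(phi) of an n x n alternating matrix (n even):
  entry (i,j), i<j, is (-1)^(i+j) Pf(phi with rows/cols i,j deleted),
  zero diagonal, skew-symmetric.  (Parity of i+j is the same for 0- and 1-based
  indices.)  Deleting rows/cols i<j: first delete j, then i.\<close>
definition pf_check :: "nat \<Rightarrow> (nat \<Rightarrow> nat \<Rightarrow> 'a::comm_ring_1) \<Rightarrow> nat \<Rightarrow> nat \<Rightarrow> 'a" where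
  "pf_check n A = (\<lambda>i j.
     if i < j then (-1) ^ (i + j) * pfaffian (n - 2) (delete_rc i (delete_rc j A))
     else if j < i then - ((-1) ^ (i + j) * pfaffian (n - 2) (delete_rc j (delete_rc i A)))
     else 0)"

definition sandwich :: "nat \<Rightarrow> (nat \<Rightarrow> nat \<Rightarrow> 'a::comm_ring_1) \<Rightarrow> (nat \<Rightarrow> nat \<Rightarrow> 'a) \<Rightarrow> nat \<Rightarrow> nat \<Rightarrow> 'a" where
  "sandwich m \<psi> B = (\<lambda>i j. \<Sum>k<m. \<Sum>l<m. \<psi> i k * B k l * \<psi> j l)"

definition block_d2 :: "nat \<Rightarrow> (nat \<Rightarrow> nat \<Rightarrow> 'a::comm_ring_1) \<Rightarrow> (nat \<Rightarrow> nat \<Rightarrow> 'a)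
    \<Rightarrow> (nat \<Rightarrow> nat \<Rightarrow> 'a) \<Rightarrow> nat \<Rightarrow> nat \<Rightarrow> 'a" where
  "block_d2 m \<phi> \<psi> \<Phi> = (\<lambda>i j.
     if i < m \<and> j < m then \<phi> i j
     else if i < m then \<psi> (j - m) i
     else if j < m then - \<psi> (i - m) j
     else \<Phi> (i - m) (j - m))"

end

theory Submission
  imports Defs
begin

definition PM :: "nat \<Rightarrow> (nat \<Rightarrow> nat) set" where
  "PM n = {\<sigma>. \<sigma> permutes {0..<n} \<and>
                 (\<forall>i < n div 2. \<sigma> (2*i) < \<sigma> (2*i+1)) \<and>
                 (\<forall>i. i + 1 < n div 2 \<longrightarrow> \<sigma> (2*i) < \<sigma> (2*i+2))}"

lemma pf_PM: "even n \<Longrightarrow> pfaffian n A =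
  (\<Sum>\<sigma>\<in>PM n. of_int (sign \<sigma>) * (\<Prod>i<n div 2. A (\<sigma> (2*i)) (\<sigma> (2*i+1))))"
  unfolding pfaffian_def PM_def by simp

lemma finite_PM: "finite (PM n)"
proof -
  have "PM n \<subseteq> {p. p permutes {0..<n}}" by (auto simp: PM_def)
  thus ?thesis using finite_permutations[of "{0..<n}"] finite_subset by blast
qed

lemma pf_cong:
  assumes "\<And>i j. i < n \<Longrightarrow> j < n \<Longrightarrow> A i j = B i j"
  shows "pfaffian n A = pfaffian n B"
proof (cases "even n")
  case True
  show ?thesis unfolding pf_PM[OF True]
  proof (rule sum.cong[OF refl], rule arg_cong[where f="\<lambda>x. _ * x"], rule prod.cong[OF refl])
    fix \<sigma> i assume s: "\<sigma> \<in> PM n" and i: "i \<in> {..<n div 2}"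
    have p: "\<sigma> permutes {0..<n}" using s by (simp add: PM_def)
    have "2*i < n" "2*i+1 < n" using i True by auto
    hence "\<sigma> (2*i) < n" "\<sigma> (2*i+1) < n" using permutes_in_image[OF p] by auto
    thus "A (\<sigma> (2*i)) (\<sigma> (2*i+1)) = B (\<sigma> (2*i)) (\<sigma> (2*i+1))" using assms by blast
  qed
qed (simp add: pfaffian_def)

lemma pf0: "pfaffian 0 A = 1"
proof -
  have "PM 0 = {id}" by (auto simp: PM_def)
  thus ?thesis unfolding pf_PM[OF even_zero] by simp
qed

fun rho :: "nat \<Rightarrow> nat \<Rightarrow> nat" where
  "rho 0 = id"
| "rho (Suc j) = (if j = 0 then id else Transposition.transpose j (Suc j) \<circ> rho j)"

lemma rho_app: "1 \<le> j \<Longrightarrow> rho j x = (if x = 1 then j else if 2 \<le> x \<and> x \<le> j then x - 1 else x)"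
proof (induction j arbitrary: x)
  case 0 then show ?case by simp
next
  case (Suc j)
  show ?case
  proof (cases "j = 0")
    case True then show ?thesis by simp
  next
    case False
    hence IH: "rho j y = (if y = 1 then j else if 2 \<le> y \<and> y \<le> j then y - 1 else y)" for y
      using Suc by auto
    show ?thesis using False by (auto simp: IH Transposition.transpose_def)
  qed
qed

lemma rho_perm: "1 \<le> j \<Longrightarrow> j < n \<Longrightarrow> rho j permutes {0..<n}"
proof (induction j)
  case 0 then show ?case by simp
next
  case (Suc j)
  show ?case
  proof (cases "j = 0")
    case True then show ?thesis by (auto simp: permutes_def)
  next
    case False
    hence "rho j permutes {0..<n}" using Suc by auto
    moreover have "Transposition.transpose j (Suc j) permutes {0..<n}"
      using Suc by (intro permutes_swap_id) auto
    ultimately have "Transposition.transpose j (Suc j) \<circ> rho j permutes {0..<n}"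
      by (rule permutes_compose)
    moreover have "rho (Suc j) = Transposition.transpose j (Suc j) \<circ> rho j" using False by simp
    ultimately show ?thesis by (simp only:)
  qed
qed

lemma rho_sign: "1 \<le> j \<Longrightarrow> sign (rho j) = (-1)^(j+1)"
proof (induction j)
  case 0 then show ?case by simp
next
  case (Suc j)
  show ?case
  proof (cases "j = 0")
    case True then show ?thesis by simp
  next
    case False
    hence "sign (rho j) = (-1)^(j+1)" using Suc.IH by (simp only: One_nat_def Suc_le_eq neq0_conv)
    moreover have "permutation (rho j)"
      using rho_perm[of j "Suc j"] False by (intro permutes_imp_permutation[of "{0..<Suc j}"]) auto
    moreover have "rho (Suc j) = Transposition.transpose j (Suc j) \<circ> rho j" using False by simp
    ultimately show ?thesis
      by (simp only: sign_compose[OF permutation_swap_id] sign_swap_id) simp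
  qed
qed

definition sh :: "nat \<Rightarrow> (nat \<Rightarrow> nat) \<Rightarrow> nat \<Rightarrow> nat" where
  "sh k \<tau> = map_permutation {0..<k} (\<lambda>x. x + 2) \<tau>"

lemma sh_perm0: "\<tau> permutes {0..<k} \<Longrightarrow> sh k \<tau> permutes {2..<k+2}"
  unfolding sh_def
proof (rule map_permutation_permutes)
  show "bij_betw (\<lambda>x. x + 2) {0..<k} {2..<k + 2}"
    by (rule bij_betw_byWitness[where f'="\<lambda>x. x - 2"]) auto
qed

lemma sh_perm: "\<tau> permutes {0..<k} \<Longrightarrow> sh k \<tau> permutes {0..<k+2}"
  by (rule permutes_subset[OF sh_perm0]) auto

lemma sh_out: "\<tau> permutes {0..<k} \<Longrightarrow> x < 2 \<or> k + 2 \<le> x \<Longrightarrow> sh k \<tau> x = x"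
  by (rule permutes_not_in[OF sh_perm0]) auto

lemma sh_app: "\<tau> permutes {0..<k} \<Longrightarrow> x < k \<Longrightarrow> sh k \<tau> (x + 2) = \<tau> x + 2"
  unfolding sh_def by (rule map_permutation_apply) (auto simp: inj_on_def)

lemma sh_sign: "\<tau> permutes {0..<k} \<Longrightarrow> sign (sh k \<tau>) = sign \<tau>"
  unfolding sh_def by (rule sign_map_permutation) (auto simp: inj_on_def)

definition fj :: "nat \<Rightarrow> nat \<Rightarrow> nat" where "fj j y = skip j (Suc y)"

lemma fj_less_iff: "fj j a < fj j b \<longleftrightarrow> a < b"
  by (auto simp: fj_def skip_def)
lemma fj_eq_iff: "fj j a = fj j b \<longleftrightarrow> a = b"
  by (auto simp: fj_def skip_def)
lemma fj_pos: "0 < fj j a" by (auto simp: fj_def skip_def)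
lemma fj_ne: "fj j a \<noteq> j" by (auto simp: fj_def skip_def)

definition finv :: "nat \<Rightarrow> nat \<Rightarrow> nat" where "finv j z = (if z < j then z - 1 else z - 2)"
lemma fj_finv: "0 < j \<Longrightarrow> 0 < z \<Longrightarrow> z \<noteq> j \<Longrightarrow> fj j (finv j z) = z"
  by (auto simp: fj_def finv_def skip_def)

definition gg :: "nat \<Rightarrow> nat \<Rightarrow> (nat \<Rightarrow> nat) \<Rightarrow> nat \<Rightarrow> nat" where
  "gg k j \<tau> = rho j \<circ> sh k \<tau>"

lemma gg_0: "1 \<le> j \<Longrightarrow> \<tau> permutes {0..<k} \<Longrightarrow> gg k j \<tau> 0 = 0"
  by (simp add: gg_def sh_out rho_app)
lemma gg_1: "1 \<le> j \<Longrightarrow> \<tau> permutes {0..<k} \<Longrightarrow> gg k j \<tau> (Suc 0) = j"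
  by (simp add: gg_def sh_out rho_app)
lemma gg_2: "1 \<le> j \<Longrightarrow> \<tau> permutes {0..<k} \<Longrightarrow> x < k \<Longrightarrow> gg k j \<tau> (Suc (Suc x)) = fj j (\<tau> x)"
  using sh_app[of \<tau> k x] by (simp add: gg_def rho_app fj_def skip_def)
lemma gg_big: "1 \<le> j \<Longrightarrow> j \<le> k + 1 \<Longrightarrow> \<tau> permutes {0..<k} \<Longrightarrow> k + 2 \<le> x \<Longrightarrow> gg k j \<tau> x = x"
  by (simp add: gg_def sh_out rho_app)

lemma gg_perm: "1 \<le> j \<Longrightarrow> j \<le> k + 1 \<Longrightarrow> \<tau> permutes {0..<k} \<Longrightarrow> gg k j \<tau> permutes {0..<k+2}"
  unfolding gg_def by (rule permutes_compose[OF sh_perm rho_perm]) auto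

lemma gg_sign: "1 \<le> j \<Longrightarrow> j \<le> k + 1 \<Longrightarrow> \<tau> permutes {0..<k} \<Longrightarrow> sign (gg k j \<tau>) = (-1)^(j+1) * sign \<tau>"
proof -
  assume a: "1 \<le> j" "j \<le> k + 1" "\<tau> permutes {0..<k}"
  have p1: "permutation (rho j)"
    using rho_perm[of j "k+2"] a by (intro permutes_imp_permutation[of "{0..<k+2}"]) auto
  have p2: "permutation (sh k \<tau>)"
    using sh_perm[OF a(3)] by (intro permutes_imp_permutation[of "{0..<k+2}"]) auto
  show ?thesis unfolding gg_def sign_compose[OF p1 p2] rho_sign[OF a(1)] sh_sign[OF a(3)] ..
qed

lemma gg_PM:
  assumes k: "even k" and j: "1 \<le> j" "j \<le> k + 1" and t: "\<tau> \<in> PM k"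
  shows "gg k j \<tau> \<in> PM (k+2)"
proof -
  have tp: "\<tau> permutes {0..<k}" and c1: "\<And>i. i < k div 2 \<Longrightarrow> \<tau> (2*i) < \<tau> (2*i+1)"
    and c2: "\<And>i. i + 1 < k div 2 \<Longrightarrow> \<tau> (2*i) < \<tau> (2*i+2)"
    using t by (auto simp: PM_def)
  have "\<forall>i < (k+2) div 2. gg k j \<tau> (2*i) < gg k j \<tau> (2*i+1)"
  proof (intro allI impI)
    fix i assume i: "i < (k+2) div 2"
    show "gg k j \<tau> (2*i) < gg k j \<tau> (2*i+1)"
    proof (cases i)
      case 0 then show ?thesis using gg_0[OF j(1) tp] gg_1[OF j(1) tp] j by simp
    next
      case (Suc i')
      hence "i' < k div 2" using i by simp
      hence "2*i' < k" "2*i'+1 < k" using k by auto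
      moreover have "\<tau> (2*i') < \<tau> (2*i'+1)" using c1 \<open>i' < k div 2\<close> .
      ultimately show ?thesis using Suc gg_2[OF j(1) tp, of "2*i'"] gg_2[OF j(1) tp, of "2*i'+1"]
        by (simp add: fj_less_iff)
    qed
  qed
  moreover have "\<forall>i. i + 1 < (k+2) div 2 \<longrightarrow> gg k j \<tau> (2*i) < gg k j \<tau> (2*i+2)"
  proof (intro allI impI)
    fix i assume i: "i + 1 < (k+2) div 2"
    show "gg k j \<tau> (2*i) < gg k j \<tau> (2*i+2)"
    proof (cases i)
      case 0 
      have "0 < k" using i 0 by simp
      then show ?thesis using 0 gg_0[OF j(1) tp] gg_2[OF j(1) tp, of 0] fj_pos by simp
    next
      case (Suc i')
      hence "i' + 1 < k div 2" using i by simp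
      hence "2*i' < k" "2*i'+2 < k" using k by auto
      moreover have "\<tau> (2*i') < \<tau> (2*i'+2)" using c2 \<open>i' + 1 < k div 2\<close> .
      ultimately show ?thesis using Suc gg_2[OF j(1) tp, of "2*i'"] gg_2[OF j(1) tp, of "2*i'+2"]
        by (simp add: fj_less_iff)
    qed
  qed
  ultimately show ?thesis using gg_perm[OF j tp] by (simp add: PM_def)
qed

lemma fj_bound: "fj j a < k + 2 \<Longrightarrow> j \<le> k + 1 \<Longrightarrow> a < k"
  by (auto simp: fj_def skip_def split: if_splits)

lemma PM_chain:
  fixes \<sigma> :: "nat \<Rightarrow> nat" and i :: nat
  assumes "\<And>i. i + 1 < h \<Longrightarrow> \<sigma> (2*i) < (\<sigma> (2*i+2) :: nat)"
  shows "i < h \<Longrightarrow> \<sigma> 0 \<le> \<sigma> (2*i)"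
proof (induction i)
  case 0 then show ?case by simp
next
  case (Suc i)
  hence "\<sigma> 0 \<le> \<sigma> (2*i)" by simp
  moreover have "\<sigma> (2*i) < \<sigma> (2*i+2)" using assms Suc.prems by simp
  ultimately show ?case by simp
qed

lemma PM_surj:
  assumes k: "even k" and s: "\<sigma> \<in> PM (k+2)"
  shows "\<exists>j \<tau>. 1 \<le> j \<and> j \<le> k+1 \<and> \<tau> \<in> PM k \<and> \<sigma> = gg k j \<tau>"
proof -
  have sp: "\<sigma> permutes {0..<k+2}"
    and d1: "\<And>i. i < k div 2 + 1 \<Longrightarrow> \<sigma> (2*i) < \<sigma> (2*i+1)"
    and d2: "\<And>i. i + 1 < k div 2 + 1 \<Longrightarrow> \<sigma> (2*i) < \<sigma> (2*i+2)"
    using s k by (auto simp: PM_def)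
  have inj: "inj \<sigma>" using sp by (rule permutes_inj)
  have img: "\<And>x. x < k+2 \<Longrightarrow> \<sigma> x < k+2" using permutes_in_image[OF sp] by simp
  have "0 \<in> \<sigma> ` {0..<k+2}" using permutes_image[OF sp] by simp
  then obtain x where x: "x < k+2" "\<sigma> x = 0" by auto
  have s0: "\<sigma> 0 = 0"
  proof (cases "even x")
    case True
    hence "x div 2 < k div 2 + 1" "2 * (x div 2) = x" using x k by auto
    hence "\<sigma> 0 \<le> \<sigma> x" using PM_chain[of "k div 2 + 1" \<sigma> "x div 2", OF d2] by simp
    thus ?thesis using x by simp
  next
    case False
    hence "x div 2 < k div 2 + 1" "2 * (x div 2) + 1 = x" using x k by auto
    hence "\<sigma> (2 * (x div 2)) < \<sigma> x" using d1[of "x div 2"] by simp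
    thus ?thesis using x by simp
  qed
  define j where "j = \<sigma> 1"
  have j0: "j \<noteq> 0" unfolding j_def using inj s0 by (metis inj_eq one_neq_zero)
  have jk: "j \<le> k + 1" unfolding j_def using img[of 1] by simp
  define \<tau> where "\<tau> = (\<lambda>x. if x < k then finv j (\<sigma> (Suc (Suc x))) else x)"
  have key: "fj j (\<tau> x) = \<sigma> (Suc (Suc x))" if "x < k" for x
  proof -
    have "\<sigma> (Suc (Suc x)) \<noteq> \<sigma> 0" "\<sigma> (Suc (Suc x)) \<noteq> \<sigma> 1" using inj by (auto simp: inj_eq)
    thus ?thesis using that j0 s0 by (simp add: \<tau>_def fj_finv j_def)
  qed
  have tk: "\<tau> x < k" if "x < k" for x
    using key[OF that] img[of "Suc (Suc x)"] that fj_bound[OF _ jk] by simp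
  have tinj: "inj_on \<tau> {0..<k}"
  proof (rule inj_onI)
    fix x y assume "x \<in> {0..<k}" "y \<in> {0..<k}" "\<tau> x = \<tau> y"
    hence "\<sigma> (Suc (Suc x)) = \<sigma> (Suc (Suc y))" using key by (metis atLeastLessThan_iff)
    thus "x = y" using inj by (simp add: inj_eq)
  qed
  have "\<tau> ` {0..<k} = {0..<k}" by (rule endo_inj_surj) (use tk tinj in auto)
  hence tp: "\<tau> permutes {0..<k}"
    by (intro bij_imp_permutes) (simp add: bij_betw_def tinj, simp add: \<tau>_def)
  have "\<tau> \<in> PM k"
  proof -
    have "\<tau> (2*i) < \<tau> (2*i+1)" if i: "i < k div 2" for i
    proof -
      have "2*i+1 < k" using i k by auto
      moreover have "\<sigma> (2*Suc i) < \<sigma> (2*Suc i+1)" using d1[of "Suc i"] i by simp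
      moreover have "fj j (\<tau> (2*i)) = \<sigma> (2*Suc i)" "fj j (\<tau> (2*i+1)) = \<sigma> (2*Suc i+1)"
        using key[of "2*i"] key[of "2*i+1"] \<open>2*i+1 < k\<close> by simp_all
      ultimately have "fj j (\<tau> (2*i)) < fj j (\<tau> (2*i+1))" by simp
      thus ?thesis by (simp add: fj_less_iff)
    qed
    moreover have "\<tau> (2*i) < \<tau> (2*i+2)" if i: "i + 1 < k div 2" for i
    proof -
      have "2*i+2 < k" using i k by auto
      moreover have "\<sigma> (2*Suc i) < \<sigma> (2*Suc i+2)" using d2[of "Suc i"] i by simp
      moreover have "fj j (\<tau> (2*i)) = \<sigma> (2*Suc i)" "fj j (\<tau> (2*i+2)) = \<sigma> (2*Suc i+2)"
        using key[of "2*i"] key[of "2*i+2"] \<open>2*i+2 < k\<close> by simp_all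
      ultimately have "fj j (\<tau> (2*i)) < fj j (\<tau> (2*i+2))" by simp
      thus ?thesis by (simp add: fj_less_iff)
    qed
    ultimately show ?thesis using tp by (simp add: PM_def)
  qed
  moreover have "\<sigma> = gg k j \<tau>"
  proof
    fix x
    consider "x = 0" | "x = 1" | "2 \<le> x \<and> x < k + 2" | "k + 2 \<le> x" by linarith
    then show "\<sigma> x = gg k j \<tau> x"
    proof cases
      case 1 then show ?thesis using s0 gg_0[OF _ tp, of j] j0 by simp
    next
      case 2 then show ?thesis using gg_1[OF _ tp, of j] j0 by (simp add: j_def)
    next
      case 3
      define y where "y = x - 2"
      have y: "x = Suc (Suc y)" "y < k" using 3 unfolding y_def by arith+
      then show ?thesis using gg_2[OF _ tp, of j y] j0 key[of y] by simp
    next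
      case 4 then show ?thesis using gg_big[OF _ jk tp] j0 permutes_not_in[OF sp, of x] by simp
    qed
  qed
  ultimately show ?thesis using j0 jk by (intro exI[of _ j] exI[of _ \<tau>]) auto
qed

lemma gg_inj:
  assumes "1 \<le> j" "\<tau> permutes {0..<k}" "1 \<le> j'" "\<tau>' permutes {0..<k}"
    and e: "gg k j \<tau> = gg k j' \<tau>'"
  shows "j = j' \<and> \<tau> = \<tau>'"
proof -
  have jj: "j = j'" using gg_1[OF assms(1,2)] gg_1[OF assms(3,4)] e by metis
  have "\<tau> x = \<tau>' x" for x
  proof (cases "x < k")
    case True
    thus ?thesis using gg_2[OF assms(1,2) True] gg_2[OF assms(3,4) True] e jj by (simp add: fj_eq_iff)
  next
    case False
    thus ?thesis using permutes_not_in[OF assms(2), of x] permutes_not_in[OF assms(4), of x] by simp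
  qed
  thus ?thesis using jj by auto
qed

lemma del0: "delete_rc 0 (delete_rc j A) a b = A (fj j a) (fj j b)"
  by (simp add: delete_rc_def fj_def skip_def)

lemma E0:
  fixes A :: "nat \<Rightarrow> nat \<Rightarrow> 'a::comm_ring_1"
  assumes k: "even k"
  shows "pfaffian (k+2) A = (\<Sum>j\<in>{1..k+1}. (-1)^(j+1) * A 0 j * pfaffian k (delete_rc 0 (delete_rc j A)))"
proof -
  define F where "F = (\<lambda>\<sigma>. of_int (sign \<sigma>) * (\<Prod>i<(k+2) div 2. A (\<sigma> (2*i)) (\<sigma> (2*i+1))) :: 'a)"
  have bij: "bij_betw (\<lambda>(j,\<tau>). gg k j \<tau>) (SIGMA j:{1..k+1}. PM k) (PM (k+2))"
    unfolding bij_betw_def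
  proof
    show "inj_on (\<lambda>(j,\<tau>). gg k j \<tau>) (SIGMA j:{1..k+1}. PM k)"
      by (rule inj_onI) (auto simp: PM_def dest!: gg_inj[rotated 4])
    show "(\<lambda>(j,\<tau>). gg k j \<tau>) ` (SIGMA j:{1..k+1}. PM k) = PM (k+2)"
    proof
      show "(\<lambda>(j,\<tau>). gg k j \<tau>) ` (SIGMA j:{1..k+1}. PM k) \<subseteq> PM (k+2)"
        using gg_PM[OF k] by auto
      show "PM (k+2) \<subseteq> (\<lambda>(j,\<tau>). gg k j \<tau>) ` (SIGMA j:{1..k+1}. PM k)"
      proof
        fix \<sigma> assume "\<sigma> \<in> PM (k+2)"
        then obtain j \<tau> where "1 \<le> j" "j \<le> k+1" "\<tau> \<in> PM k" "\<sigma> = gg k j \<tau>"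
          using PM_surj[OF k] by blast
        thus "\<sigma> \<in> (\<lambda>(j,\<tau>). gg k j \<tau>) ` (SIGMA j:{1..k+1}. PM k)" by force
      qed
    qed
  qed
  have trm: "F (gg k j \<tau>) = (-1)^(j+1) * A 0 j * (of_int (sign \<tau>) *
      (\<Prod>i<k div 2. delete_rc 0 (delete_rc j A) (\<tau> (2*i)) (\<tau> (2*i+1))))"
    if j: "j \<in> {1..k+1}" and t: "\<tau> \<in> PM k" for j \<tau>
  proof -
    have tp: "\<tau> permutes {0..<k}" using t by (simp add: PM_def)
    have j1: "1 \<le> j" "j \<le> k+1" using j by auto
    have "(\<Prod>i<(k+2) div 2. A (gg k j \<tau> (2*i)) (gg k j \<tau> (2*i+1)))
        = A (gg k j \<tau> 0) (gg k j \<tau> 1) * (\<Prod>i<k div 2. A (gg k j \<tau> (2*Suc i)) (gg k j \<tau> (2*Suc i+1)))"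
    proof -
      have eq: "(k+2) div 2 = Suc (k div 2)" by simp
      show ?thesis unfolding eq prod.lessThan_Suc_shift by simp
    qed
    also have "(\<Prod>i<k div 2. A (gg k j \<tau> (2*Suc i)) (gg k j \<tau> (2*Suc i+1)))
        = (\<Prod>i<k div 2. delete_rc 0 (delete_rc j A) (\<tau> (2*i)) (\<tau> (2*i+1)))"
    proof (rule prod.cong[OF refl])
      fix i assume "i \<in> {..<k div 2}"
      hence "2*i < k" "2*i+1 < k" using k by auto
      thus "A (gg k j \<tau> (2*Suc i)) (gg k j \<tau> (2*Suc i+1)) = delete_rc 0 (delete_rc j A) (\<tau> (2*i)) (\<tau> (2*i+1))"
        using gg_2[OF j1(1) tp, of "2*i"] gg_2[OF j1(1) tp, of "2*i+1"] by (simp add: del0)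
    qed
    finally show ?thesis unfolding F_def gg_sign[OF j1 tp] gg_0[OF j1(1) tp] 
      using gg_1[OF j1(1) tp] by (simp add: mult_ac)
  qed
  have "pfaffian (k+2) A = sum F (PM (k+2))" using k by (simp add: pf_PM F_def)
  also have "\<dots> = (\<Sum>p\<in>(SIGMA j:{1..k+1}. PM k). F ((\<lambda>(j,\<tau>). gg k j \<tau>) p))"
    by (rule sum.reindex_bij_betw[OF bij, symmetric])
  also have "\<dots> = (\<Sum>j\<in>{1..k+1}. \<Sum>\<tau>\<in>PM k. F (gg k j \<tau>))"
    by (subst sum.Sigma) (auto simp: finite_PM split_def)
  also have "\<dots> = (\<Sum>j\<in>{1..k+1}. (-1)^(j+1) * A 0 j * pfaffian k (delete_rc 0 (delete_rc j A)))"
    by (rule sum.cong[OF refl]) (simp add: trm pf_PM[OF k] sum_distrib_left)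
  finally show ?thesis .
qed

definition G :: "nat \<Rightarrow> nat \<Rightarrow> nat \<Rightarrow> nat" where
  "G i j x = skip (max i j) (skip (min i j) (Suc x))"

lemma AR1: "1 \<le> j \<Longrightarrow> skip j (Suc (skip i' x)) = G (skip j (Suc i')) j x"
  by (simp add: G_def skip_def split: if_split) arith?

lemma AR2: "1 \<le> i \<Longrightarrow> 1 \<le> j' \<Longrightarrow> skip i (skip j' (Suc x)) = G i (skip i j') x"
  by (simp add: G_def skip_def split: if_split) arith?

lemma sum_diff_if: "finite S \<Longrightarrow> sum f (S - {a}) = (\<Sum>x\<in>S. if x = a then 0 else f x)"
  by (simp add: sum.If_cases Diff_eq Int_commute)

lemma sum_swap_diff:
  assumes "finite S"
  shows "(\<Sum>j\<in>S. \<Sum>i\<in>S - {j}. F i j) = (\<Sum>i\<in>S. \<Sum>j\<in>S - {i}. F i j)"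
proof -
  have "(\<Sum>j\<in>S. \<Sum>i\<in>S - {j}. F i j) = (\<Sum>j\<in>S. \<Sum>i\<in>S. if i = j then 0 else F i j)"
    using assms by (simp add: sum_diff_if)
  also have "\<dots> = (\<Sum>i\<in>S. \<Sum>j\<in>S. if i = j then 0 else F i j)" by (rule sum.swap)
  also have "\<dots> = (\<Sum>i\<in>S. \<Sum>j\<in>S - {i}. F i j)"
    using assms by (simp add: sum_diff_if eq_commute)
  finally show ?thesis .
qed

lemma skip0 [simp]: "skip 0 z = Suc z" by (simp add: skip_def)

lemma L_step:
  fixes A :: "nat \<Rightarrow> nat \<Rightarrow> 'a::comm_ring_1"
  assumes k: "even k" "2 \<le> k"
    and IH: "\<And>B::nat\<Rightarrow>nat\<Rightarrow>'a. pfaffian k B = (\<Sum>i<k-1. (-1)^i * B i (k-1) * pfaffian (k-2) (delete_rc i B))"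
  shows "pfaffian (k+2) A = (\<Sum>i<k+1. (-1)^i * A i (k+1) * pfaffian k (delete_rc i A))"
proof -
  define S where "S = {1..k}"
  define F where "F i j = (if i < j then (-1)^(i+j) else -((-1)^(i+j))) *
     (A 0 j * A i (k+1) * pfaffian (k-2) (\<lambda>x y. A (G i j x) (G i j y)))" for i j
  have lhs: "(-1)^(j+1) * A 0 j * pfaffian k (delete_rc 0 (delete_rc j A)) = (\<Sum>i\<in>S-{j}. F i j)"
    if j: "j \<in> S" for j
  proof -
    let ?B = "delete_rc 0 (delete_rc j A)"
    have "(-1)^(j+1) * A 0 j * pfaffian k ?B = (\<Sum>i'<k-1. (-1)^(j+1) * A 0 j *
        ((-1)^i' * ?B i' (k-1) * pfaffian (k-2) (delete_rc i' ?B)))"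
      by (simp add: IH sum_distrib_left)
    also have "\<dots> = (\<Sum>i'<k-1. F (skip j (Suc i')) j)"
    proof (rule sum.cong[OF refl])
      fix i' assume i': "i' \<in> {..<k-1}"
      have e1: "?B i' (k-1) = A (skip j (Suc i')) (k+1)" using j k i' by (simp add: delete_rc_def skip_def S_def)
      have e2: "pfaffian (k-2) (delete_rc i' ?B) =
          pfaffian (k-2) (\<lambda>x y. A (G (skip j (Suc i')) j x) (G (skip j (Suc i')) j y))"
        by (rule pf_cong) (use j in \<open>simp add: delete_rc_def AR1 S_def\<close>)
      have e3: "(-1)^(j+1) * (-1)^i' = (if skip j (Suc i') < j then (-1)^(skip j (Suc i') + j)
           else - ((-1)^(skip j (Suc i') + j)) :: 'a)"
        by (auto simp: skip_def power_add)
      have "(-1)^(j+1) * A 0 j * ((-1)^i' * ?B i' (k-1) * pfaffian (k-2) (delete_rc i' ?B))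
          = ((-1)^(j+1) * (-1)^i') * (A 0 j * A (skip j (Suc i')) (k+1) *
            pfaffian (k-2) (\<lambda>x y. A (G (skip j (Suc i')) j x) (G (skip j (Suc i')) j y)))"
        unfolding e1 e2 by (simp add: ac_simps)
      thus "(-1)^(j+1) * A 0 j * ((-1)^i' * ?B i' (k-1) * pfaffian (k-2) (delete_rc i' ?B))
          = F (skip j (Suc i')) j" by (simp only: e3 F_def)
    qed
    also have "\<dots> = (\<Sum>i\<in>S-{j}. F i j)"
    proof (rule sum.reindex_bij_betw)
      show "bij_betw (\<lambda>i'. skip j (Suc i')) {..<k-1} (S-{j})"
        by (rule bij_betw_byWitness[where f'="\<lambda>i. if i < j then i - 1 else i - 2"])
           (use j k in \<open>auto simp: skip_def S_def\<close>)
    qed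
    finally show ?thesis .
  qed
  have e0: "pfaffian k C = (\<Sum>j'\<in>{1..k-1}. (-1)^(j'+1) * C 0 j' * pfaffian (k-2) (delete_rc 0 (delete_rc j' C)))"
    for C :: "nat \<Rightarrow> nat \<Rightarrow> 'a"
  proof -
    have kk: "k - 2 + 2 = k" "k - 2 + 1 = k - 1" using k by auto
    have "even (k-2)" using k by simp
    from E0[OF this, of C] show ?thesis unfolding kk .
  qed
  have rhs: "(-1)^i * A i (k+1) * pfaffian k (delete_rc i A) = (\<Sum>j\<in>S-{i}. F i j)"
    if i: "i \<in> S" for i
  proof -
    let ?C = "delete_rc i A"
    have "(-1)^i * A i (k+1) * pfaffian k ?C = (\<Sum>j'\<in>{1..k-1}. (-1)^i * A i (k+1) *
        ((-1)^(j'+1) * ?C 0 j' * pfaffian (k-2) (delete_rc 0 (delete_rc j' ?C))))"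
      by (simp add: e0[of ?C] sum_distrib_left)
    also have "\<dots> = (\<Sum>j'\<in>{1..k-1}. F i (skip i j'))"
    proof (rule sum.cong[OF refl])
      fix j' assume j': "j' \<in> {1..k-1}"
      have e1: "?C 0 j' = A 0 (skip i j')" using i by (simp add: delete_rc_def skip_def S_def)
      have e2: "pfaffian (k-2) (delete_rc 0 (delete_rc j' ?C)) =
          pfaffian (k-2) (\<lambda>x y. A (G i (skip i j') x) (G i (skip i j') y))"
        by (rule pf_cong) (use i j' in \<open>simp add: delete_rc_def AR2 S_def\<close>)
      have e3: "(-1)^i * (-1)^(j'+1) = (if i < skip i j' then (-1)^(i + skip i j')
           else - ((-1)^(i + skip i j')) :: 'a)"
        by (auto simp: skip_def power_add)
      have "(-1)^i * A i (k+1) * ((-1)^(j'+1) * ?C 0 j' * pfaffian (k-2) (delete_rc 0 (delete_rc j' ?C)))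
          = ((-1)^i * (-1)^(j'+1)) * (A 0 (skip i j') * A i (k+1) *
            pfaffian (k-2) (\<lambda>x y. A (G i (skip i j') x) (G i (skip i j') y)))"
        unfolding e1 e2 by (simp add: ac_simps)
      thus "(-1)^i * A i (k+1) * ((-1)^(j'+1) * ?C 0 j' * pfaffian (k-2) (delete_rc 0 (delete_rc j' ?C)))
          = F i (skip i j')" by (simp only: e3 F_def)
    qed
    also have "\<dots> = (\<Sum>j\<in>S-{i}. F i j)"
    proof (rule sum.reindex_bij_betw)
      show "bij_betw (\<lambda>j'. skip i j') {1..k-1} (S-{i})"
        by (rule bij_betw_byWitness[where f'="\<lambda>j. if j < i then j else j - 1"])
           (use i k in \<open>auto simp: skip_def S_def\<close>)
    qed
    finally show ?thesis .
  qed
  have last: "(-1)^(k+1+1) * A 0 (k+1) * pfaffian k (delete_rc 0 (delete_rc (k+1) A))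
      = (-1)^0 * A 0 (k+1) * pfaffian k (delete_rc 0 A)"
  proof -
    have "pfaffian k (delete_rc 0 (delete_rc (k+1) A)) = pfaffian k (delete_rc 0 A)"
      by (rule pf_cong) (simp add: delete_rc_def skip_def)
    thus ?thesis using k by simp
  qed
  have "pfaffian (k+2) A = (\<Sum>j\<in>{1..Suc k}. (-1)^(j+1) * A 0 j * pfaffian k (delete_rc 0 (delete_rc j A)))"
    using E0[OF k(1)] by simp
  also have "\<dots> = (\<Sum>j\<in>S. (-1)^(j+1) * A 0 j * pfaffian k (delete_rc 0 (delete_rc j A)))
      + (-1)^(k+1+1) * A 0 (k+1) * pfaffian k (delete_rc 0 (delete_rc (k+1) A))"
    by (simp add: S_def)
  also have "(\<Sum>j\<in>S. (-1)^(j+1) * A 0 j * pfaffian k (delete_rc 0 (delete_rc j A)))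
      = (\<Sum>j\<in>S. \<Sum>i\<in>S-{j}. F i j)" using lhs by (rule sum.cong[OF refl])
  also have "\<dots> = (\<Sum>i\<in>S. \<Sum>j\<in>S-{i}. F i j)" by (rule sum_swap_diff) (simp add: S_def)
  also have "\<dots> = (\<Sum>i\<in>S. (-1)^i * A i (k+1) * pfaffian k (delete_rc i A))"
    using rhs by (intro sum.cong[OF refl]) simp
  also note last
  also have "{..<k+1} = insert 0 S" by (auto simp: S_def)
  hence "(\<Sum>i<k+1. (-1)^i * A i (k+1) * pfaffian k (delete_rc i A))
      = (-1)^0 * A 0 (k+1) * pfaffian k (delete_rc 0 A) + (\<Sum>i\<in>S. (-1)^i * A i (k+1) * pfaffian k (delete_rc i A))"
    by (simp add: S_def)
  ultimately show ?thesis by (simp add: add.commute)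
qed

lemma L:
  fixes A :: "nat \<Rightarrow> nat \<Rightarrow> 'a::comm_ring_1"
  shows "pfaffian (2*h+2) A = (\<Sum>i<2*h+1. (-1)^i * A i (2*h+1) * pfaffian (2*h) (delete_rc i A))"
proof (induction h arbitrary: A)
  case 0
  show ?case using E0[of 0 A] by (simp add: pf0)
next
  case (Suc h)
  have "pfaffian (2*h+2+2) A = (\<Sum>i<2*h+2+1. (-1)^i * A i (2*h+2+1) * pfaffian (2*h+2) (delete_rc i A))"
  proof (rule L_step)
    fix B :: "nat \<Rightarrow> nat \<Rightarrow> 'a"
    show "pfaffian (2*h+2) B = (\<Sum>i<2*h+2-1. (-1)^i * B i (2*h+2-1) * pfaffian (2*h+2-2) (delete_rc i B))"
      using Suc.IH[of B] by simp
  qed auto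
  thus ?case by (simp add: algebra_simps)
qed

lemma pf2: "pfaffian 2 A = A 0 1"
  using L[of 0 A] by (simp add: pf0 numeral_2_eq_2)

lemma skip_le: "skip k x \<le> Suc x" by (simp add: skip_def)
lemma skip_comm: "i \<le> k \<Longrightarrow> skip (Suc k) (skip i x) = skip i (skip k x)"
  by (simp add: skip_def)

lemma core:
  fixes M \<phi> :: "nat \<Rightarrow> nat \<Rightarrow> 'a::comm_ring_1" and u v :: "nat \<Rightarrow> 'a"
  assumes m: "even m"
    and M\<phi>: "\<And>a b. a < m \<Longrightarrow> b < m \<Longrightarrow> M a b = \<phi> a b"
    and Mu: "\<And>a. a < m \<Longrightarrow> M a m = u a"
    and Mv: "\<And>a. a < m \<Longrightarrow> M a (m+1) = v a"
    and Mc: "M m (m+1) = c"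
  shows "pfaffian (m+2) M = (\<Sum>a<m. \<Sum>b<m. u a * pf_check m \<phi> a b * v b) + pfaffian m \<phi> * c"
proof -
  obtain h where h: "m = 2*h" using m by blast
  have LM: "pfaffian (m+2) B = (\<Sum>i<m+1. (-1)^i * B i (m+1) * pfaffian m (delete_rc i B))" for B :: "nat \<Rightarrow> nat \<Rightarrow> 'a"
    using L[of h B] h by simp
  have last: "(-1)^m * M m (m+1) * pfaffian m (delete_rc m M) = pfaffian m \<phi> * c"
  proof -
    have "pfaffian m (delete_rc m M) = pfaffian m \<phi>"
      by (rule pf_cong) (simp add: delete_rc_def skip_def M\<phi>)
    thus ?thesis using m Mc by (simp add: mult_ac)
  qed
  have inner: "(-1)^i * M i (m+1) * pfaffian m (delete_rc i M) = (\<Sum>a<m. u a * pf_check m \<phi> a i * v i)"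
    if i: "i < m" for i
  proof -
    have m2: "2 \<le> m" using i m by presburger
    define h' where "h' = h - 1"
    have h': "m = 2*h'+2" using h m2 unfolding h'_def by arith
    have LM2: "pfaffian m B = (\<Sum>k<m-1. (-1)^k * B k (m-1) * pfaffian (m-2) (delete_rc k B))" for B :: "nat \<Rightarrow> nat \<Rightarrow> 'a"
      using L[of h' B] h' by simp
    have "(-1)^i * M i (m+1) * pfaffian m (delete_rc i M)
       = (\<Sum>k<m-1. (-1)^i * M i (m+1) * ((-1)^k * (delete_rc i M) k (m-1) * pfaffian (m-2) (delete_rc k (delete_rc i M))))"
      by (simp add: LM2 sum_distrib_left)
    also have "\<dots> = (\<Sum>k<m-1. u (skip i k) * pf_check m \<phi> (skip i k) i * v i)"
    proof (rule sum.cong[OF refl])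
      fix k assume k: "k \<in> {..<m-1}"
      have mv: "M i (Suc m) = v i" using Mv[OF i] by simp
      have sk: "skip i k < m" using k i by (simp add: skip_def) arith
      have e1: "(delete_rc i M) k (m-1) = u (skip i k)"
      proof -
        have "skip i (m-1) = m" using i m2 by (simp add: skip_def)
        thus ?thesis using Mu[OF sk] by (simp add: delete_rc_def)
      qed
      have bnd: "skip i (skip k x) < m" if "x < m - 2" for x
        using skip_le[of k x] skip_le[of i "skip k x"] that by linarith
      show "(-1)^i * M i (m+1) * ((-1)^k * (delete_rc i M) k (m-1) * pfaffian (m-2) (delete_rc k (delete_rc i M)))
          = u (skip i k) * pf_check m \<phi> (skip i k) i * v i"
      proof (cases "k < i")
        case True
        have e2: "pfaffian (m-2) (delete_rc k (delete_rc i M)) = pfaffian (m-2) (delete_rc k (delete_rc i \<phi>))"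
          by (rule pf_cong) (simp add: delete_rc_def M\<phi> bnd)
        have ck: "pf_check m \<phi> k i = (-1)^(k+i) * pfaffian (m-2) (delete_rc k (delete_rc i \<phi>))"
          using True by (simp add: pf_check_def)
        show ?thesis using True unfolding e1 e2 by (simp add: skip_def ck mv power_add mult_ac)
      next
        case False
        have e2: "pfaffian (m-2) (delete_rc k (delete_rc i M)) = pfaffian (m-2) (delete_rc i (delete_rc (Suc k) \<phi>))"
          by (rule pf_cong) (use False in \<open>simp add: delete_rc_def M\<phi> bnd skip_comm\<close>)
        have ck: "pf_check m \<phi> (Suc k) i = - ((-1)^(Suc k+i) * pfaffian (m-2) (delete_rc i (delete_rc (Suc k) \<phi>)))"
          using False by (simp add: pf_check_def)
        show ?thesis using False unfolding e1 e2 by (simp add: skip_def ck mv power_add mult_ac)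
      qed
    qed
    also have "\<dots> = (\<Sum>a\<in>{..<m}-{i}. u a * pf_check m \<phi> a i * v i)"
    proof (rule sum.reindex_bij_betw)
      show "bij_betw (\<lambda>k. skip i k) {..<m-1} ({..<m}-{i})"
        by (rule bij_betw_byWitness[where f'="\<lambda>a. if a < i then a else a - 1"])
           (use i in \<open>auto simp: skip_def\<close>)
    qed
    also have "\<dots> = (\<Sum>a<m. u a * pf_check m \<phi> a i * v i)"
    proof -
      have z: "u i * pf_check m \<phi> i i * v i = 0" by (simp add: pf_check_def)
      show ?thesis using sum.remove[of "{..<m}" i "\<lambda>a. u a * pf_check m \<phi> a i * v i"] i z by simp
    qed
    finally show ?thesis .
  qed
  have "pfaffian (m+2) M = (\<Sum>i<m. (-1)^i * M i (m+1) * pfaffian m (delete_rc i M)) + pfaffian m \<phi> * c"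
    using LM[of M] last by simp
  also have "(\<Sum>i<m. (-1)^i * M i (m+1) * pfaffian m (delete_rc i M)) = (\<Sum>i<m. \<Sum>a<m. u a * pf_check m \<phi> a i * v i)"
    using inner by (intro sum.cong) auto
  also have "\<dots> = (\<Sum>a<m. \<Sum>b<m. u a * pf_check m \<phi> a b * v b)" by (rule sum.swap)
  finally show ?thesis .
qed

theorem mainTheorem7:
  fixes m :: nat
    and \<phi> \<psi> \<Phi> :: "nat \<Rightarrow> nat \<Rightarrow> 'a::comm_ring_1"
    and l :: nat
  assumes "even m"
    and "alternating m \<phi>"
    and "alternating 3 \<Phi>"
    and "l \<in> {1, 2, 3}"
  shows "pf_minor (m + 3) (m + l) (block_d2 m \<phi> \<psi> \<Phi>)
       = pf_minor 3 l (sandwich m \<psi> (pf_check m \<phi>))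
         + pfaffian m \<phi> * pf_minor 3 l \<Phi>"
proof -
  define d2 where "d2 = block_d2 m \<phi> \<psi> \<Phi>"
  define M where "M = delete_rc (m+l-1) d2"
  define p where "p = skip (l-1) 0"
  define q where "q = skip (l-1) 1"
  have l: "l = 1 \<or> l = 2 \<or> l = 3" using assms(4) by auto
  have M\<phi>: "M a b = \<phi> a b" if "a < m" "b < m" for a b
    using l that by (auto simp: M_def d2_def delete_rc_def skip_def block_d2_def)
  have Mu: "M a m = \<psi> p a" if "a < m" for a
    using l that by (auto simp: M_def d2_def delete_rc_def skip_def block_d2_def p_def)
  have Mv: "M a (m+1) = \<psi> q a" if "a < m" for a
    using l that by (auto simp: M_def d2_def delete_rc_def skip_def block_d2_def q_def numeral_2_eq_2)
  have Mc: "M m (m+1) = \<Phi> p q"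
    using l by (auto simp: M_def d2_def delete_rc_def skip_def block_d2_def p_def q_def numeral_2_eq_2)
  have cr: "pfaffian (m+2) M = sandwich m \<psi> (pf_check m \<phi>) p q + pfaffian m \<phi> * \<Phi> p q"
    using core[of m M \<phi> "\<psi> p" "\<psi> q" "\<Phi> p q", OF assms(1) M\<phi> Mu Mv Mc] by (simp add: sandwich_def)
  have lhs: "pf_minor (m+3) (m+l) d2 = (-1)^(l+1) * pfaffian (m+2) M"
  proof -
    have "(-1::'a)^(m+l+1) = (-1)^(l+1)" using assms(1) by (simp add: power_add)
    moreover have "m + 3 - 1 = m + 2" by simp
    ultimately show ?thesis unfolding pf_minor_def M_def by simp
  qed
  have r1: "pf_minor 3 l B = (-1)^(l+1) * B p q" for B :: "nat \<Rightarrow> nat \<Rightarrow> 'a"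
  proof -
    have "(3::nat) - 1 = 2" by simp
    thus ?thesis unfolding pf_minor_def by (simp add: pf2 delete_rc_def p_def q_def)
  qed
  show ?thesis unfolding d2_def[symmetric] lhs r1 cr by (simp add: algebra_simps)
qed

end
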